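(* Let $G$ be a finite simple graph with edge ideal $I=I(G)$, fix a total order $L_1>L_2>\dots>L_k$ on the minimal monomial generators (edges) of $I$, and for each $n\geq1$ let $L^{(n)}_1>L^{(n)}_2>\cdots$ be the minimal monomial generators of $I^n$ listed in the order described in the context. Then for every $n\geq1$, every $k'\geq 1$ and every $j\leq k'$: if $(L^{(n)}_j : L^{(n)}_{k'+1})$ is not contained in $(I^{n+1} : L^{(n)}_{k'+1})$, then there exists $i\leq k'$ such that $(L^{(n)}_i : L^{(n)}_{k'+1})$ is generated by a single variable and $(L^{(n)}_j : L^{(n)}_{k'+1})\subseteq (L^{(n)}_i : L^{(n)}_{k'+1})$.
   Context: $S=K[\,x : x\in V(G)\,]$ is the polynomial ring over a field $K$ on the vertices of $G$ and $I(G)=(xy : xy \text{ an edge of } G)$. For monomials $m,m'$, $(m:m')$ denotes the colon ideal $((m):(m'))$. Ordering: for $n\ge1$, every minimal monomial generator $M$ of $I^n$ can be written as $M=L_1^{a_1}\cdots L_k^{a_k}$ with $a_1+\dots+a_k=n$; its maximal expression is the lexicographically largest such exponent vector $(a_1,\dots,a_k)$ (lex: $(a)>_{\mathrm{lex}}(b)$ if at the first index where they differ, $a_i>b_i$). For minimal generators $M,N$ of $I^n$, $M>N$ iff the maximal expression of $M$ is lexicographically larger than that of $N$ (for $n=1$ this is the fixed order on the $L_i$). $L^{(n)}_1>L^{(n)}_2>\cdots$ is the list of all minimal monomial generators of $I^n$ in this decreasing order. *)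

theory Defs
  imports Main "HOL-Library.Multiset"
begin

text \<open>Monomials in the variables (elements of the vertex type) are multisets of variables
 (exponent vectors); the monomial u divides v iff u \<subseteq># v; product is +.
 A monomial ideal is represented by the set of monomials (over the vertex set V) it contains;
 containment of monomial ideals is containment of these sets.\<close>

definition monomials_over :: "'a set \<Rightarrow> 'a multiset set" where
  "monomials_over V = {u. set_mset u \<subseteq> V}"

definition simple_graph :: "'a set \<Rightarrow> 'a set set \<Rightarrow> bool" where
  "simple_graph V E \<longleftrightarrow> finite V \<and> (\<forall>e\<in>E. e \<subseteq> V \<and> card e = 2)"

definition edge_mono :: "'a set \<Rightarrow> 'a multiset" where
  "edge_mono e = mset_set e"

text \<open>Ls = [L_1, ..., L_k] is the fixed total order L_1 > ... > L_k of the edges.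
 The product L_1^{a_1} ... L_k^{a_k} for an exponent vector a.\<close>
definition expr_prod :: "'a set list \<Rightarrow> nat list \<Rightarrow> 'a multiset" where
  "expr_prod Ls a = sum_list (map2 (\<lambda>c e. repeat_mset c (edge_mono e)) a Ls)"

definition expressions :: "'a set list \<Rightarrow> nat \<Rightarrow> nat list set" where
  "expressions Ls n = {a. length a = length Ls \<and> sum_list a = n}"

text \<open>Products of n edges (monomial generators of I^n, not nec. minimal).\<close>
definition pow_prods :: "'a set list \<Rightarrow> nat \<Rightarrow> 'a multiset set" where
  "pow_prods Ls n = expr_prod Ls ` expressions Ls n"

definition min_gens :: "'a set list \<Rightarrow> nat \<Rightarrow> 'a multiset set" where
  "min_gens Ls n = {M \<in> pow_prods Ls n. \<forall>N\<in>pow_prods Ls n. N \<subseteq># M \<longrightarrow> N = M}"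

definition lex_gt :: "nat list \<Rightarrow> nat list \<Rightarrow> bool" where
  "lex_gt a b \<longleftrightarrow> length a = length b \<and>
     (\<exists>i < length a. take i a = take i b \<and> a ! i > b ! i)"

definition max_expr :: "'a set list \<Rightarrow> nat \<Rightarrow> 'a multiset \<Rightarrow> nat list" where
  "max_expr Ls n M = (THE a. a \<in> expressions Ls n \<and> expr_prod Ls a = M \<and>
      (\<forall>b \<in> expressions Ls n. expr_prod Ls b = M \<longrightarrow> b \<noteq> a \<longrightarrow> lex_gt a b))"

definition gen_gt :: "'a set list \<Rightarrow> nat \<Rightarrow> 'a multiset \<Rightarrow> 'a multiset \<Rightarrow> bool" where
  "gen_gt Ls n M N \<longleftrightarrow> lex_gt (max_expr Ls n M) (max_expr Ls n N)"

text \<open>The list L^{(n)}_1 > L^{(n)}_2 > ... (0-indexed in Isabelle).\<close>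
definition gens_list :: "'a set list \<Rightarrow> nat \<Rightarrow> 'a multiset list" where
  "gens_list Ls n = (THE xs. distinct xs \<and> set xs = min_gens Ls n \<and> sorted_wrt (gen_gt Ls n) xs)"

abbreviation Lgen :: "'a set list \<Rightarrow> nat \<Rightarrow> nat \<Rightarrow> 'a multiset" where
  "Lgen Ls n j \<equiv> gens_list Ls n ! (j - 1)"

definition mideal :: "'a set \<Rightarrow> 'a multiset set \<Rightarrow> 'a multiset set" where
  "mideal V S = {u \<in> monomials_over V. \<exists>g\<in>S. g \<subseteq># u}"

definition mono_colon :: "'a set \<Rightarrow> 'a multiset \<Rightarrow> 'a multiset \<Rightarrow> 'a multiset set" where
  "mono_colon V m m' = {u \<in> monomials_over V. m \<subseteq># u + m'}"

definition ideal_colon :: "'a set \<Rightarrow> 'a multiset set \<Rightarrow> 'a multiset \<Rightarrow> 'a multiset set" where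
  "ideal_colon V J m' = {u \<in> monomials_over V. u + m' \<in> J}"

definition edge_ideal_pow :: "'a set \<Rightarrow> 'a set list \<Rightarrow> nat \<Rightarrow> 'a multiset set" where
  "edge_ideal_pow V Ls n = mideal V (pow_prods Ls n)"

end

theory Submission
  imports Defs
begin


definition pr :: "('i \<Rightarrow> 'a set) \<Rightarrow> 'i multiset \<Rightarrow> 'a multiset" where
  "pr f C = \<Sum>\<^sub># (image_mset (\<lambda>i. mset_set (f i)) C)"

lemma pr_empty[simp]: "pr f {#} = {#}" by (simp add: pr_def)
lemma pr_add_mset[simp]: "pr f (add_mset i C) = mset_set (f i) + pr f C" by (simp add: pr_def)
lemma pr_plus[simp]: "pr f (C + D) = pr f C + pr f D" by (simp add: pr_def)
lemma pr_mono: "C \<subseteq># D \<Longrightarrow> pr f C \<subseteq># pr f D"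
  by (metis mset_subset_eq_exists_conv pr_plus)
lemma pr_minus: "C \<subseteq># D \<Longrightarrow> pr f (D - C) = pr f D - pr f C"
  by (metis add_diff_cancel_left' mset_subset_eq_exists_conv pr_plus)
lemma pr_elem: "i \<in># C \<Longrightarrow> pr f C = mset_set (f i) + pr f (C - {#i#})"
  by (metis insert_DiffM pr_add_mset)

lemma count_pr: "(\<forall>i\<in>#C. finite (f i)) \<Longrightarrow> count (pr f C) v = size (filter_mset (\<lambda>i. v \<in> f i) C)"
  by (induction C) (auto simp: count_mset_set')

lemma size_pr: "(\<forall>i\<in>#C. card (f i) = 2) \<Longrightarrow> size (pr f C) = 2 * size C"
  by (induction C) auto

lemma size_filter_pos: "size (filter_mset P C) > 0 \<longleftrightarrow> (\<exists>i\<in>#C. P i)"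
  by (induction C) auto

lemma size_filter_one: "size (filter_mset P C) = 1 \<Longrightarrow> i \<in># C \<Longrightarrow> P i \<Longrightarrow> j \<in># C \<Longrightarrow> P j \<Longrightarrow> i = j"
proof -
  assume a: "size (filter_mset P C) = 1" "i \<in># C" "P i" "j \<in># C" "P j"
  obtain k where k: "filter_mset P C = {#k#}" using size_1_singleton_mset[OF a(1)] by blast
  have "i \<in># filter_mset P C" "j \<in># filter_mset P C" using a by auto
  thus "i = j" using k by auto
qed

lemma card2_obtain: "card S = 2 \<Longrightarrow> c \<in> S \<Longrightarrow> \<exists>a. S = {a, c} \<and> a \<noteq> c"
  by (metis card_2_iff insert_commute insertE singletonD)

lemma uniq_at:
  assumes "count (pr f B) v = 1" "\<forall>i\<in>#B. finite (f i)"
    "b1 \<in># B" "v \<in> f b1" "b2 \<in># B" "v \<in> f b2"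
  shows "b1 = b2"
  using assms size_filter_one[of "\<lambda>i. v \<in> f i" B b1 b2] count_pr[of B f v] by auto

lemma size_diff_sym:
  fixes X Y :: "'a multiset" assumes "size X = size Y" shows "size (X - Y) = size (Y - X)"
proof -
  have "X + (Y - X) = Y + (X - Y)"
    by (simp add: multiset_eq_iff; linarith)
  hence "size X + size (Y - X) = size Y + size (X - Y)" by (metis size_union)
  thus ?thesis using assms by simp
qed

lemma all_eq_size: "(\<forall>x\<in>#d. x = c) \<Longrightarrow> size d = count d c"
  by (induction d) auto


definition goodp where
  "goodp f e A B A1 B1 \<longleftrightarrow> A1 \<subseteq># A \<and> B1 \<subseteq># B \<and> pr f A1 - pr f B1 \<subseteq># pr f A - pr f B \<and>
     (size A1 > size B1 \<or> (size A1 = size B1 \<and> e \<in># A1 \<and> size (pr f A1 - pr f B1) \<le> 1))"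

lemma stuck_case:
  fixes f :: "'i \<Rightarrow> 'a set"
  assumes sz: "size A = size B" and eA: "e \<in># A" and cd: "\<forall>i\<in>#A+B. card (f i) = 2"
    and big: "\<not> size (pr f A - pr f B) \<le> 1"
    and n1: "\<not> (\<exists>\<beta>\<in>#B. \<forall>v\<in>f \<beta>. count (pr f A) v < count (pr f B) v)"
    and n2: "\<not> (\<exists>\<alpha> \<beta> v. \<alpha> \<in># A - {#e#} \<and> \<beta> \<in># B \<and> v \<in> f \<alpha> \<and> v \<in> f \<beta> \<and>
               (\<forall>w\<in>f \<beta>. w \<noteq> v \<longrightarrow> count (pr f A) w < count (pr f B) w))"
  shows "\<exists>A1 B1. goodp f e A B A1 B1"
proof -
  have fin: "\<forall>i\<in>#A+B. finite (f i)" using cd by (metis card.infinite zero_neq_numeral)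
  hence finA: "\<forall>i\<in>#A. finite (f i)" and finB: "\<forall>i\<in>#B. finite (f i)" by auto
  have cA: "count (pr f A) v = size (filter_mset (\<lambda>i. v \<in> f i) A)" for v by (rule count_pr[OF finA])
  have cB: "count (pr f B) v = size (filter_mset (\<lambda>i. v \<in> f i) B)" for v by (rule count_pr[OF finB])
  have posB: "count (pr f B) v \<ge> 1" if "b \<in># B" "v \<in> f b" for v b
    using that cB[of v] size_filter_pos[of "\<lambda>i. v \<in> f i" B] by auto
  have posB': "\<exists>b. b \<in># B \<and> v \<in> f b" if "0 < count (pr f B) v" for v
    using that cB[of v] size_filter_pos[of "\<lambda>i. v \<in> f i" B] by auto
  have uniq: "b1 = b2" if "count (pr f B) v = 1" "b1 \<in># B" "v \<in> f b1" "b2 \<in># B" "v \<in> f b2" for v b1 b2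
    using uniq_at[OF that(1) finB that(2-5)] .
  have S: "\<exists>a. f \<beta> = {a, c} \<and> a \<noteq> c \<and> a \<in> f e \<and> count (pr f A) a = 1 \<and> count (pr f B) a = 1"
    if h: "count (pr f A) c < count (pr f B) c" "\<beta> \<in># B" "c \<in> f \<beta>" for c \<beta>
  proof -
    obtain a where a: "f \<beta> = {a, c}" "a \<noteq> c" using card2_obtain cd h(2,3) by fastforce
    have na: "\<not> count (pr f A) a < count (pr f B) a" using n1 h a by auto
    have b1: "count (pr f B) a \<ge> 1" using posB h(2) a(1) by auto
    have noal: "\<forall>\<alpha>\<in>#A - {#e#}. a \<notin> f \<alpha>"
    proof (intro ballI notI)
      fix \<alpha> assume al: "\<alpha> \<in># A - {#e#}" "a \<in> f \<alpha>"
      have "\<forall>w\<in>f \<beta>. w \<noteq> a \<longrightarrow> count (pr f A) w < count (pr f B) w" using h(1) a(1) by simp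
      hence "\<alpha> \<in># A - {#e#} \<and> \<beta> \<in># B \<and> a \<in> f \<alpha> \<and> a \<in> f \<beta> \<and>
               (\<forall>w\<in>f \<beta>. w \<noteq> a \<longrightarrow> count (pr f A) w < count (pr f B) w)"
        using al h(2) a(1) by simp
      thus False using n2 by blast
    qed
    obtain X where X: "A = add_mset e X" using multi_member_split[OF eA] by blast
    have "X = A - {#e#}" using X by simp
    hence nX: "\<forall>\<alpha>\<in>#X. a \<notin> f \<alpha>" using noal by blast
    have fX: "filter_mset (\<lambda>i. a \<in> f i) X = {#}" using nX by simp
    have "size (filter_mset (\<lambda>i. a \<in> f i) A) = (if a \<in> f e then 1 else 0)"
      unfolding X using fX by simp
    hence cAa: "count (pr f A) a = (if a \<in> f e then 1 else 0)" using cA[of a] by simp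
    have ae: "a \<in> f e" using cAa na b1 by (cases "a \<in> f e") auto
    hence c1: "count (pr f A) a = 1" using cAa by simp
    hence "count (pr f B) a = 1" using na b1 by linarith
    hence "a \<in> f e \<and> count (pr f A) a = 1 \<and> count (pr f B) a = 1" using ae c1 by blast
    thus ?thesis using a by blast
  qed
  have sd: "size (pr f B - pr f A) \<ge> 2"
  proof -
    have "size (pr f A) = size (pr f B)" using size_pr[of A f] size_pr[of B f] cd sz by auto
    thus ?thesis using size_diff_sym[of "pr f A" "pr f B"] big by simp
  qed
  obtain c where c: "count (pr f A) c < count (pr f B) c"
  proof -
    have "pr f B - pr f A \<noteq> {#}" using sd by auto
    then obtain x where "x \<in># pr f B - pr f A" by blast
    thus ?thesis using that by (simp add: in_diff_count)
  qed
  have "0 < count (pr f B) c" using c by linarith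
  then obtain \<beta> where \<beta>: "\<beta> \<in># B" "c \<in> f \<beta>" using posB' by blast
  obtain a where a: "f \<beta> = {a, c}" "a \<noteq> c" "a \<in> f e" "count (pr f A) a = 1" "count (pr f B) a = 1"
    using S[OF c \<beta>] by blast
  obtain y where y: "f e = {a, y}" "y \<noteq> a"
    using card2_obtain[of "f e" a] cd eA a(3) by (metis insert_commute union_iff)
  have feA: "finite (f e)" "finite (f \<beta>)" using finA finB eA \<beta> by auto
  have sA1: "{#e#} \<subseteq># A" "{#\<beta>#} \<subseteq># B" using eA \<beta> by auto
  show ?thesis
  proof (cases "c = y")
    case True
    have "pr f {#e#} - pr f {#\<beta>#} = {#}" using True a y by simp
    thus ?thesis using sA1 unfolding goodp_def by (intro exI[of _ "{#e#}"] exI[of _ "{#\<beta>#}"]) auto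
  next
    case cy: False
    consider (ii) "count (pr f B) y < count (pr f A) y" | (iii) "count (pr f A) y < count (pr f B) y"
      | (iv) "count (pr f A) y = count (pr f B) y" by linarith
    then show ?thesis
    proof cases
      case ii
      have d1: "pr f {#e#} - pr f {#\<beta>#} \<subseteq># {#y#}"
        using a y cy feA by (auto intro!: mset_subset_eqI simp: count_mset_set')
      have d2: "{#y#} \<subseteq># pr f A - pr f B" using ii by (simp add: in_diff_count)
      have "size (pr f {#e#} - pr f {#\<beta>#}) \<le> 1" using size_mset_mono[OF d1] by simp
      thus ?thesis using sA1 d1 d2 unfolding goodp_def
        by (intro exI[of _ "{#e#}"] exI[of _ "{#\<beta>#}"]) (auto intro: subset_mset.trans)
    next
      case iii
      have "0 < count (pr f B) y" using iii by linarith
      then obtain \<beta>2 where b2: "\<beta>2 \<in># B" "y \<in> f \<beta>2" using posB' by blast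
      obtain a2 where a2: "f \<beta>2 = {a2, y}" "a2 \<noteq> y" "a2 \<in> f e" using S[OF iii b2] by blast
      have "a2 = a" using a2 y by auto
      hence "\<beta>2 = \<beta>" using uniq[OF a(5) b2(1) _ \<beta>(1)] a a2 by auto
      hence False using a a2 cy y by auto
      thus ?thesis ..
    next
      case iv
      have "count (pr f A) y \<ge> 1" using cA[of y] size_filter_pos[of "\<lambda>i. y \<in> f i" A] eA y by auto
      hence "0 < count (pr f B) y" using iv by linarith
      then obtain \<beta>' where b': "\<beta>' \<in># B" "y \<in> f \<beta>'" using posB' by blast
      obtain c' where c': "f \<beta>' = {c', y}" "c' \<noteq> y" using card2_obtain cd b' by fastforce
      have anb: "a \<notin> f \<beta>'"
      proof
        assume "a \<in> f \<beta>'"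
        hence "\<beta>' = \<beta>" using uniq[OF a(5) b'(1) _ \<beta>(1)] a by auto
        thus False using b' a cy y by auto
      qed
      have ca: "c' \<noteq> a" using anb c' by auto
      have bb: "\<beta>' \<noteq> \<beta>" using anb a by auto
      have yb: "y \<notin> f \<beta>" using a y cy by auto
      have fb': "finite (f \<beta>')" using finB b' by auto
      show ?thesis
      proof (cases "count (pr f A) c' < count (pr f B) c' \<and> (c \<noteq> c' \<or> count (pr f A) c + 2 \<le> count (pr f B) c)")
        case True
        let ?A1 = "A - {#e#}" and ?B1 = "B - {#\<beta>, \<beta>'#}"
        have s1: "{#\<beta>, \<beta>'#} \<subseteq># B" using \<beta> b' bb by (simp add: insert_subset_eq_iff in_diff_count)
        have pA: "pr f ?A1 = pr f A - mset_set (f e)" using pr_minus[of "{#e#}" A f] eA by simp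
        have pB: "pr f ?B1 = pr f B - (mset_set (f \<beta>) + mset_set (f \<beta>'))"
          using pr_minus[OF s1, of f] by simp
        have sub: "pr f ?A1 - pr f ?B1 \<subseteq># pr f A - pr f B"
        proof (rule mset_subset_eqI)
          fix w
          show "count (pr f ?A1 - pr f ?B1) w \<le> count (pr f A - pr f B) w"
          proof -
            have ce: "count (mset_set (f e)) w = (if w = a \<or> w = y then 1 else 0)"
              using y feA by (auto simp: count_mset_set')
            have cb: "count (mset_set (f \<beta>)) w = (if w = a \<or> w = c then 1 else 0)"
              using a feA by (auto simp: count_mset_set')
            have cb': "count (mset_set (f \<beta>')) w = (if w = c' \<or> w = y then 1 else 0)"
              using c' fb' by (auto simp: count_mset_set')
            show ?thesis
              unfolding pA pB count_diff count_union ce cb cb'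
              using True c a(2,4,5) y(2) c'(2) ca cy iv
              by (cases "w = a"; cases "w = y"; cases "w = c"; cases "w = c'"; simp)
          qed
        qed
        have "size B \<ge> 2" using size_mset_mono[OF s1] by simp
        hence "size ?A1 > size ?B1" using sz eA s1 by (simp add: size_Diff_submset size_Diff_singleton)
        thus ?thesis using sub unfolding goodp_def by (intro exI[of _ ?A1] exI[of _ ?B1]) auto
      next
        case nsol: False
        have more: "count (pr f A) c + 2 \<le> count (pr f B) c \<or> (\<exists>c2. c2 \<noteq> c \<and> count (pr f A) c2 < count (pr f B) c2)"
        proof (rule ccontr)
          assume h: "\<not> ?thesis"
          hence "\<forall>x\<in>#pr f B - pr f A. x = c" by (auto simp: in_diff_count)
          hence "size (pr f B - pr f A) = count (pr f B - pr f A) c" by (rule all_eq_size)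
          thus False using h sd by (simp; arith)
        qed
        show ?thesis
        proof (cases "count (pr f A) c + 2 \<le> count (pr f B) c")
          case True
          have "count (pr f B) c \<ge> 2" using True by simp
          have "B = add_mset \<beta> (B - {#\<beta>#})" using \<beta> by simp
          hence "size (filter_mset (\<lambda>i. c \<in> f i) B) = Suc (size (filter_mset (\<lambda>i. c \<in> f i) (B - {#\<beta>#})))"
            using \<beta>(2) by (metis filter_mset_add_mset size_add_mset)
          hence "size (filter_mset (\<lambda>i. c \<in> f i) (B - {#\<beta>#})) > 0" using True cB[of c] by simp
          then obtain \<beta>3 where b3: "\<beta>3 \<in># B - {#\<beta>#}" "c \<in> f \<beta>3" using iffD1[OF size_filter_pos] by blast
          have b3B: "\<beta>3 \<in># B" using b3 by (meson in_diffD)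
          obtain a3 where a3: "f \<beta>3 = {a3, c}" "a3 \<noteq> c" "a3 \<in> f e" "count (pr f B) a3 = 1"
            using S[OF c b3B b3(2)] by blast
          show ?thesis
          proof (cases "a3 = a")
            case True
            have "size (filter_mset (\<lambda>i. a \<in> f i) B) \<ge> 2"
            proof -
              have "{#\<beta>, \<beta>3#} \<subseteq># B" using \<beta> b3 by (simp add: insert_subset_eq_iff)
              hence "filter_mset (\<lambda>i. a \<in> f i) {#\<beta>, \<beta>3#} \<subseteq># filter_mset (\<lambda>i. a \<in> f i) B"
                by (rule multiset_filter_mono)
              moreover have "filter_mset (\<lambda>i. a \<in> f i) {#\<beta>, \<beta>3#} = {#\<beta>, \<beta>3#}" using a a3 True by auto
              ultimately show ?thesis by (metis size_mset_mono size_add_mset size_single One_nat_def Suc_1)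
            qed
            thus ?thesis using a(5) cB[of a] by simp
          next
            case False
            hence "a3 = y" using a3 y by auto
            hence "\<beta>3 = \<beta>'" using uniq[OF a3(4) b3B _ b'(1)] a3 b' by auto
            hence "c = c'" using a3 c' cy `a3 = y` by (auto simp: doubleton_eq_iff)
            thus ?thesis using nsol c True by auto
          qed
        next
          case False
          with more obtain c2 where c2: "c2 \<noteq> c" "count (pr f A) c2 < count (pr f B) c2" by blast
          have "0 < count (pr f B) c2" using c2 by linarith
          then obtain \<beta>4 where b4: "\<beta>4 \<in># B" "c2 \<in> f \<beta>4" using posB' by blast
          obtain a4 where a4: "f \<beta>4 = {a4, c2}" "a4 \<noteq> c2" "a4 \<in> f e" "count (pr f B) a4 = 1"
            using S[OF c2(2) b4] by blast
          show ?thesis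
          proof (cases "a4 = a")
            case True
            hence "\<beta>4 = \<beta>" using uniq[OF a(5) b4(1) _ \<beta>(1)] a a4 by auto
            thus ?thesis using a4 a c2 True by auto
          next
            case False
            hence "a4 = y" using a4 y by auto
            hence "\<beta>4 = \<beta>'" using uniq[OF a4(4) b4(1) _ b'(1)] a4 b' by auto
            hence "c2 = c'" using a4 c' `a4 = y` by (auto simp: doubleton_eq_iff)
            thus ?thesis using nsol c2 by auto
          qed
        qed
      qed
    qed
  qed
qed


lemma key:
  fixes f :: "'i \<Rightarrow> 'a set"
  assumes "size A = size B" "e \<in># A" "\<forall>i\<in>#A+B. card (f i) = 2"
  shows "\<exists>A1 B1. goodp f e A B A1 B1"
  using assms
proof (induction "size A" arbitrary: A B rule: less_induct)
  case less
  note sz = less.prems(1) and eA = less.prems(2) and cd = less.prems(3)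
  have fin: "\<forall>i\<in>#A+B. finite (f i)" using cd by (metis card.infinite zero_neq_numeral)
  hence finA: "\<forall>i\<in>#A. finite (f i)" and finB: "\<forall>i\<in>#B. finite (f i)" by auto
  have cA: "count (pr f A) v = size (filter_mset (\<lambda>i. v \<in> f i) A)" for v by (rule count_pr[OF finA])
  have cB: "count (pr f B) v = size (filter_mset (\<lambda>i. v \<in> f i) B)" for v by (rule count_pr[OF finB])
  show ?case
  proof (cases "size (pr f A - pr f B) \<le> 1")
    case True
    then show ?thesis using sz eA unfolding goodp_def by blast
  next
    case False
    consider (c1) "\<exists>\<beta>\<in>#B. \<forall>v\<in>f \<beta>. count (pr f A) v < count (pr f B) v"
      | (c2) "\<exists>\<alpha> \<beta> v. \<alpha> \<in># A - {#e#} \<and> \<beta> \<in># B \<and> v \<in> f \<alpha> \<and> v \<in> f \<beta> \<and>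
               (\<forall>w\<in>f \<beta>. w \<noteq> v \<longrightarrow> count (pr f A) w < count (pr f B) w)"
      | (c3) "\<not> (\<exists>\<beta>\<in>#B. \<forall>v\<in>f \<beta>. count (pr f A) v < count (pr f B) v)"
             "\<not> (\<exists>\<alpha> \<beta> v. \<alpha> \<in># A - {#e#} \<and> \<beta> \<in># B \<and> v \<in> f \<alpha> \<and> v \<in> f \<beta> \<and>
               (\<forall>w\<in>f \<beta>. w \<noteq> v \<longrightarrow> count (pr f A) w < count (pr f B) w))"
      by blast
    then show ?thesis
    proof cases
      case c1
      then obtain \<beta> where b: "\<beta> \<in># B" "\<forall>v\<in>f \<beta>. count (pr f A) v < count (pr f B) v" by blast
      have fb: "finite (f \<beta>)" using finB b by auto
      have pB: "pr f (B - {#\<beta>#}) = pr f B - mset_set (f \<beta>)"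
        using pr_minus[of "{#\<beta>#}" B f] b by simp
      have "pr f A - pr f (B - {#\<beta>#}) \<subseteq># pr f A - pr f B"
      proof (rule mset_subset_eqI)
        fix w
        show "count (pr f A - pr f (B - {#\<beta>#})) w \<le> count (pr f A - pr f B) w"
          using b(2)[rule_format, of w] fb unfolding pB by (auto simp: count_mset_set')
      qed
      moreover have "size A > size (B - {#\<beta>#})" using sz b(1)
        by (metis diff_less less_one size_Diff_singleton size_eq_0_iff_empty empty_iff set_mset_empty gr0I)
      ultimately show ?thesis unfolding goodp_def by (meson diff_subset_eq_self subset_mset.refl)
    next
      case c2
      then obtain \<alpha> \<beta> v where ab: "\<alpha> \<in># A - {#e#}" "\<beta> \<in># B" "v \<in> f \<alpha>" "v \<in> f \<beta>"
        "\<forall>w\<in>f \<beta>. w \<noteq> v \<longrightarrow> count (pr f A) w < count (pr f B) w" by blast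
      have aA: "\<alpha> \<in># A" using ab(1) by (meson in_diffD)
      have eA': "e \<in># A - {#\<alpha>#}" using ab(1) eA by (auto simp: in_diff_count split: if_splits)
      have fa: "finite (f \<alpha>)" "finite (f \<beta>)" using finA finB aA ab(2) by auto
      have pA: "pr f (A - {#\<alpha>#}) = pr f A - mset_set (f \<alpha>)"
        using pr_minus[of "{#\<alpha>#}" A f] aA by simp
      have pB: "pr f (B - {#\<beta>#}) = pr f B - mset_set (f \<beta>)"
        using pr_minus[of "{#\<beta>#}" B f] ab(2) by simp
      have cBv: "count (pr f B) v \<ge> 1" using ab(2,4) cB[of v] size_filter_pos[of "\<lambda>i. v \<in> f i" B] by auto
      have sub: "pr f (A - {#\<alpha>#}) - pr f (B - {#\<beta>#}) \<subseteq># pr f A - pr f B"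
      proof (rule mset_subset_eqI)
        fix w
        show "count (pr f (A - {#\<alpha>#}) - pr f (B - {#\<beta>#})) w \<le> count (pr f A - pr f B) w"
          using ab(5)[rule_format, of w] fa cBv ab(3,4) unfolding pA pB
          by (cases "w = v") (auto simp: count_mset_set')
      qed
      have sA: "size A = Suc (size (A - {#\<alpha>#}))" by (metis aA insert_DiffM size_add_mset)
      have sB: "size B = Suc (size (B - {#\<beta>#}))" by (metis ab(2) insert_DiffM size_add_mset)
      have IH: "\<exists>A1 B1. goodp f e (A - {#\<alpha>#}) (B - {#\<beta>#}) A1 B1"
      proof (rule less.hyps)
        show "size (A - {#\<alpha>#}) < size A" using sA by simp
        show "size (A - {#\<alpha>#}) = size (B - {#\<beta>#})" using sA sB sz by simp
        show "e \<in># A - {#\<alpha>#}" by (rule eA')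
        show "\<forall>i\<in>#A - {#\<alpha>#} + (B - {#\<beta>#}). card (f i) = 2"
        proof
          fix i assume "i \<in># A - {#\<alpha>#} + (B - {#\<beta>#})"
          hence "i \<in># A + B" by (meson in_diffD union_iff)
          thus "card (f i) = 2" using cd by blast
        qed
      qed
      then obtain A1 B1 where g: "goodp f e (A - {#\<alpha>#}) (B - {#\<beta>#}) A1 B1" by blast
      have "goodp f e A B A1 B1" using g sub unfolding goodp_def
        by (meson diff_subset_eq_self subset_mset.trans)
      thus ?thesis by blast
    next
      case c3
      show ?thesis using stuck_case[OF sz eA cd False c3] .
    qed
  qed
qed


definition IM :: "nat list \<Rightarrow> nat multiset" where
  "IM a = (\<Sum>i<length a. replicate_mset (a!i) i)"

definition vec :: "nat \<Rightarrow> nat multiset \<Rightarrow> nat list" where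
  "vec k C = map (count C) [0..<k]"

lemma count_IM: "count (IM a) j = (if j < length a then a!j else 0)"
  unfolding IM_def count_sum by (simp add: count_replicate_mset)

lemma set_IM: "set_mset (IM a) \<subseteq> {..<length a}"
  using count_IM by (metis (full_types) count_eq_zero_iff lessThan_iff subsetI)

lemma size_sum_mset_gen: "size (sum g I) = (\<Sum>i\<in>I. size (g i :: 'b multiset))"
  by (induction I rule: infinite_finite_induct) auto

lemma size_IM: "size (IM a) = sum_list a"
proof -
  have "size (IM a) = (\<Sum>i<length a. a!i)" unfolding IM_def size_sum_mset_gen by simp
  thus ?thesis by (simp add: sum_list_sum_nth atLeast0LessThan)
qed

lemma vec_IM: "vec (length a) (IM a) = a"
  by (rule nth_equalityI) (auto simp: vec_def count_IM)

lemma IM_vec: "set_mset C \<subseteq> {..<k} \<Longrightarrow> IM (vec k C) = C"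
  by (auto simp: multiset_eq_iff count_IM vec_def) (meson count_eq_zero_iff lessThan_iff not_le subsetD)

lemma length_vec[simp]: "length (vec k C) = k" by (simp add: vec_def)

lemma expr_prod_sum: "length a = length Ls \<Longrightarrow>
  expr_prod Ls a = (\<Sum>i<length a. repeat_mset (a!i) (mset_set (Ls!i)))"
proof (induction a arbitrary: Ls)
  case Nil thus ?case by (simp add: expr_prod_def)
next
  case (Cons x a)
  then obtain e Ls' where L: "Ls = e # Ls'" by (cases Ls) auto
  have "expr_prod Ls (x # a) = repeat_mset x (mset_set e) + expr_prod Ls' a"
    by (simp add: expr_prod_def L edge_mono_def)
  also have "\<dots> = repeat_mset x (mset_set e) + (\<Sum>i<length a. repeat_mset (a!i) (mset_set (Ls'!i)))"
    using Cons L by simp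
  also have "\<dots> = (\<Sum>i<length (x#a). repeat_mset ((x#a)!i) (mset_set (Ls!i)))"
    unfolding L length_Cons sum.lessThan_Suc_shift by simp
  finally show ?case .
qed

lemma pr_sum: "pr f (sum g I) = (\<Sum>i\<in>I. pr f (g i))"
  by (induction I rule: infinite_finite_induct) auto

lemma pr_rep: "pr f (replicate_mset m i) = repeat_mset m (mset_set (f i))"
  by (induction m) auto

lemma expr_prod_pr: "length a = length Ls \<Longrightarrow> expr_prod Ls a = pr (nth Ls) (IM a)"
  by (simp add: expr_prod_sum IM_def pr_sum pr_rep)



lemma take_eq_iff: "i \<le> length a \<Longrightarrow> i \<le> length b \<Longrightarrow> take i a = take i b \<longleftrightarrow> (\<forall>j<i. a!j = b!j)"
  by (auto simp: list_eq_iff_nth_eq)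

lemma lex_gt_iff: "lex_gt a b \<longleftrightarrow> length a = length b \<and> (\<exists>i<length a. (\<forall>j<i. a!j = b!j) \<and> b!i < a!i)"
  unfolding lex_gt_def by (metis less_imp_le take_eq_iff)

lemma lex_irrefl: "\<not> lex_gt a a" by (simp add: lex_gt_iff)

lemma lex_trans: assumes "lex_gt a b" "lex_gt b c" shows "lex_gt a c"
proof -
  obtain i where i: "i < length a" "\<forall>j<i. a!j = b!j" "b!i < a!i" "length a = length b"
    using assms(1) by (auto simp: lex_gt_iff)
  obtain k where k: "k < length b" "\<forall>j<k. b!j = c!j" "c!k < b!k" "length b = length c"
    using assms(2) by (auto simp: lex_gt_iff)
  show ?thesis unfolding lex_gt_iff
  proof (cases i k rule: linorder_cases)
    case less thus "length a = length c \<and> (\<exists>i<length a. (\<forall>j<i. a ! j = c ! j) \<and> c ! i < a ! i)"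
      using i k by (intro conjI exI[of _ i]) auto
  next
    case equal thus "length a = length c \<and> (\<exists>i<length a. (\<forall>j<i. a ! j = c ! j) \<and> c ! i < a ! i)"
      using i k by (intro conjI exI[of _ i]) auto
  next
    case greater thus "length a = length c \<and> (\<exists>i<length a. (\<forall>j<i. a ! j = c ! j) \<and> c ! i < a ! i)"
      using i k by (intro conjI exI[of _ k]) auto
  qed
qed

lemma lex_asym: "lex_gt a b \<Longrightarrow> \<not> lex_gt b a"
  using lex_trans lex_irrefl by blast

lemma lex_total: assumes "length a = length b" "a \<noteq> b" shows "lex_gt a b \<or> lex_gt b a"
proof -
  have ex: "\<exists>i. i < length a \<and> a!i \<noteq> b!i" using assms nth_equalityI by blast
  define i where "i = (LEAST i. i < length a \<and> a!i \<noteq> b!i)"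
  have i: "i < length a" "a!i \<noteq> b!i" using LeastI_ex[OF ex] unfolding i_def by auto
  have j: "\<forall>j<i. a!j = b!j" using not_less_Least i(1) unfolding i_def
    by (metis (mono_tags, lifting) order.strict_trans)
  show ?thesis
  proof (cases "b!i < a!i")
    case True thus ?thesis using i j assms(1) unfolding lex_gt_iff by blast
  next
    case False hence "a!i < b!i" using i by simp
    thus ?thesis using i j assms(1) unfolding lex_gt_iff by (metis)
  qed
qed

lemma finite_expressions: "finite (expressions Ls n)"
proof -
  have "expressions Ls n \<subseteq> {xs. set xs \<subseteq> {..n} \<and> length xs = length Ls}"
    unfolding expressions_def using member_le_sum_list by fastforce
  thus ?thesis using finite_lists_length_eq[of "{..n}"] finite_subset by blast
qed

lemma finite_max_rel:
  assumes "finite S" "S \<noteq> {}" "\<And>x y z. R x y \<Longrightarrow> R y z \<Longrightarrow> R x z"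
    "\<And>x y. x \<in> S \<Longrightarrow> y \<in> S \<Longrightarrow> x \<noteq> y \<Longrightarrow> R x y \<or> R y x"
  shows "\<exists>m\<in>S. \<forall>x\<in>S. x \<noteq> m \<longrightarrow> R m x"
  using assms
proof (induction S rule: finite_ne_induct)
  case (singleton x) thus ?case by auto
next
  case (insert x F)
  then obtain m where m: "m \<in> F" "\<forall>y\<in>F. y \<noteq> m \<longrightarrow> R m y" by blast
  have "m \<noteq> x" using m insert by auto
  hence "R m x \<or> R x m" using insert m by auto
  thus ?case
  proof
    assume "R m x" thus ?thesis using m by (intro bexI[of _ m]) auto
  next
    assume xm: "R x m"
    have "\<forall>y\<in>insert x F. y \<noteq> x \<longrightarrow> R x y"
    proof (intro ballI impI)
      fix y assume "y \<in> insert x F" "y \<noteq> x"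
      hence "y \<in> F" by simp
      thus "R x y" using xm m insert.prems(1) by (cases "y = m") blast+
    qed
    thus ?thesis by blast
  qed
qed

lemma max_expr_props:
  assumes "M \<in> pow_prods Ls n"
  shows "max_expr Ls n M \<in> expressions Ls n \<and> expr_prod Ls (max_expr Ls n M) = M \<and>
    (\<forall>b\<in>expressions Ls n. expr_prod Ls b = M \<longrightarrow> b \<noteq> max_expr Ls n M \<longrightarrow> lex_gt (max_expr Ls n M) b)"
proof -
  let ?X = "{a\<in>expressions Ls n. expr_prod Ls a = M}"
  have fin: "finite ?X" by (rule finite_subset[OF _ finite_expressions]) auto
  have ne: "?X \<noteq> {}" using assms unfolding pow_prods_def by auto
  have tot: "lex_gt x y \<or> lex_gt y x" if "x \<in> ?X" "y \<in> ?X" "x \<noteq> y" for x y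
    using that lex_total by (auto simp: expressions_def)
  obtain m where m: "m \<in> ?X" "\<forall>x\<in>?X. x \<noteq> m \<longrightarrow> lex_gt m x"
    using finite_max_rel[OF fin ne, of lex_gt] lex_trans tot by blast
  let ?P = "\<lambda>a. a \<in> expressions Ls n \<and> expr_prod Ls a = M \<and>
      (\<forall>b \<in> expressions Ls n. expr_prod Ls b = M \<longrightarrow> b \<noteq> a \<longrightarrow> lex_gt a b)"
  have "?P m" using m by auto
  moreover have "a = m" if "?P a" for a
    using that m lex_asym by blast
  ultimately have "?P (THE a. ?P a)" by (rule theI)
  thus ?thesis unfolding max_expr_def .
qed



lemma exists_sorted:
  assumes "finite S" "\<And>x y z. R x y \<Longrightarrow> R y z \<Longrightarrow> R x z"
    "\<And>x y. x \<in> S \<Longrightarrow> y \<in> S \<Longrightarrow> x \<noteq> y \<Longrightarrow> R x y \<or> R y x"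
  shows "\<exists>xs. distinct xs \<and> set xs = S \<and> sorted_wrt R xs"
  using assms
proof (induction "card S" arbitrary: S)
  case 0
  hence "S = {}" by simp
  thus ?case by (intro exI[of _ "[]"]) auto
next
  case (Suc k)
  hence ne: "S \<noteq> {}" by auto
  obtain m where m: "m \<in> S" "\<forall>x\<in>S. x \<noteq> m \<longrightarrow> R m x"
    using finite_max_rel[OF Suc.prems(1) ne, of R] Suc.prems by blast
  have "card (S - {m}) = k" using Suc.hyps(2) m(1) Suc.prems(1) by simp
  then obtain xs where xs: "distinct xs" "set xs = S - {m}" "sorted_wrt R xs"
    using Suc.hyps(1)[of "S - {m}"] Suc.prems by blast
  have 1: "m \<notin> set xs" using xs(2) by simp
  have 2: "set (m#xs) = S" using xs(2) m(1) by auto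
  have 3: "\<forall>x\<in>set xs. R m x" using xs(2) m(2) by simp
  have "distinct (m # xs) \<and> set (m # xs) = S \<and> sorted_wrt R (m # xs)"
    using 1 2 3 xs(1,3) by simp
  thus ?case by blast
qed

lemma sorted_unique:
  assumes "sorted_wrt R xs" "sorted_wrt R ys" "set xs = set ys" "distinct xs" "distinct ys"
    "\<And>x y. R x y \<Longrightarrow> \<not> R y x"
  shows "xs = ys"
  using assms
proof (induction xs arbitrary: ys)
  case Nil thus ?case by simp
next
  case (Cons x xs)
  then obtain y ys' where ys: "ys = y # ys'" by (cases ys) auto
  show ?case
  proof (cases "x = y")
    case True
    have "set xs = set (x # xs) - {x}" using Cons.prems(4) by auto
    also have "\<dots> = set ys - {y}" using Cons.prems(3) True by simp
    also have "\<dots> = set ys'" using Cons.prems(5) ys by auto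
    finally have "set xs = set ys'" .
    hence "xs = ys'" using Cons ys by auto
    thus ?thesis using True ys by simp
  next
    case False
    hence "y \<in> set xs" "x \<in> set ys'" using Cons.prems(3) ys by auto
    hence "R x y" "R y x" using Cons.prems(1,2) ys by auto
    thus ?thesis using Cons.prems(6) by blast
  qed
qed

lemma size_eq_sub: "X \<subseteq># Y \<Longrightarrow> size X = size Y \<Longrightarrow> X = Y"
proof -
  assume a: "X \<subseteq># Y" "size X = size Y"
  then obtain Z where Z: "Y = X + Z" using mset_subset_eq_exists_conv by blast
  hence "size Z = 0" using a(2) by simp
  thus "X = Y" using Z by simp
qed

context
  fixes Ls :: "'a set list"
  assumes H: "\<forall>e\<in>set Ls. card e = 2"
begin

lemma card_nth: "i < length Ls \<Longrightarrow> card (Ls!i) = 2" using H by auto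

lemma size_expr_prod: "a \<in> expressions Ls n \<Longrightarrow> size (expr_prod Ls a) = 2*n"
proof -
  assume a: "a \<in> expressions Ls n"
  hence l: "length a = length Ls" "sum_list a = n" by (auto simp: expressions_def)
  have "\<forall>i\<in>#IM a. card (Ls!i) = 2" using set_IM[of a] l card_nth by auto
  thus ?thesis unfolding expr_prod_pr[OF l(1)] using size_pr[of "IM a" "nth Ls"] size_IM[of a] l(2) by simp
qed

lemma min_gens_eq: "min_gens Ls n = pow_prods Ls n"
proof -
  have "N = M" if "M \<in> pow_prods Ls n" "N \<in> pow_prods Ls n" "N \<subseteq># M" for M N
  proof -
    have "size M = 2*n" "size N = 2*n" using that size_expr_prod unfolding pow_prods_def by auto
    thus ?thesis using that(3) size_eq_sub by metis
  qed
  thus ?thesis unfolding min_gens_def by auto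
qed

lemma gen_gt_total: "M \<in> pow_prods Ls n \<Longrightarrow> N \<in> pow_prods Ls n \<Longrightarrow> M \<noteq> N \<Longrightarrow> gen_gt Ls n M N \<or> gen_gt Ls n N M"
proof -
  assume a: "M \<in> pow_prods Ls n" "N \<in> pow_prods Ls n" "M \<noteq> N"
  have "max_expr Ls n M \<noteq> max_expr Ls n N" using max_expr_props[OF a(1)] max_expr_props[OF a(2)] a(3) by metis
  moreover have "length (max_expr Ls n M) = length (max_expr Ls n N)"
    using max_expr_props[OF a(1)] max_expr_props[OF a(2)] by (simp add: expressions_def)
  ultimately show ?thesis unfolding gen_gt_def using lex_total by blast
qed

lemma gens_list_props:
  "distinct (gens_list Ls n) \<and> set (gens_list Ls n) = min_gens Ls n \<and> sorted_wrt (gen_gt Ls n) (gens_list Ls n)"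
proof -
  let ?P = "\<lambda>xs. distinct xs \<and> set xs = min_gens Ls n \<and> sorted_wrt (gen_gt Ls n) xs"
  have fin: "finite (min_gens Ls n)" unfolding min_gens_eq pow_prods_def using finite_expressions by auto
  obtain xs where xs: "?P xs"
    using exists_sorted[OF fin, of "gen_gt Ls n"] gen_gt_total lex_trans
    unfolding min_gens_eq gen_gt_def by blast
  have "ys = xs" if "?P ys" for ys
    using sorted_unique[of "gen_gt Ls n" ys xs] that xs lex_asym unfolding gen_gt_def by blast
  hence "?P (THE xs. ?P xs)" using xs by (rule theI[of ?P, rotated])
  thus ?thesis unfolding gens_list_def .
qed

end


lemma sub_of_size: "m \<le> size C \<Longrightarrow> \<exists>C'. C' \<subseteq># C \<and> size C' = m"
proof (induction C arbitrary: m)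
  case empty thus ?case by simp
next
  case (add x C)
  show ?case
  proof (cases "m \<le> size C")
    case True
    then obtain C' where c: "C' \<subseteq># C" "size C' = m" using add.IH by blast
    have "C' \<subseteq># add_mset x C" using c(1) by (metis add_mset_add_single mset_subset_eq_add_left subset_mset.order_trans)
    thus ?thesis using c(2) by blast
  next
    case False
    hence "m = size (add_mset x C)" using add.prems by simp
    thus ?thesis by blast
  qed
qed

lemma diffconv: "(X \<subseteq># u + M) \<longleftrightarrow> (X - M \<subseteq># u)"
  unfolding subseteq_mset_def by (simp add: le_diff_conv)

lemma diff_add_sub: "P1 \<subseteq># M \<Longrightarrow> M - P1 + P2 \<subseteq># M + (P2 - P1)"
  by (rule mset_subset_eqI) (simp add: mset_subset_eq_count le_diff_conv)

lemma diff_add_minus: "P1 \<subseteq># M \<Longrightarrow> (M - P1 + P2) - M = P2 - P1"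
  by (simp add: multiset_eq_iff mset_subset_eq_count; metis mset_subset_eq_count diff_add_inverse2 diff_diff_left le_add_diff_inverse2 add.commute)

lemma split_inter: "(A::'a multiset) = (A - (A - B)) + (A - B)"
  by (simp add: multiset_eq_iff)

lemma inter_sym: "(A::'a multiset) - (A - B) = B - (B - A)"
  by (simp add: multiset_eq_iff; linarith)

lemma set_pr: "set_mset (pr f C) \<subseteq> \<Union> (f ` set_mset C)"
proof (induction C)
  case empty thus ?case by simp
next
  case (add x C)
  have "set_mset (mset_set (f x)) \<subseteq> f x" by (cases "finite (f x)") auto
  thus ?case using add by auto
qed



theorem theorem4p12:
  fixes V :: "'a set" and E :: "'a set set" and Ls :: "'a set list"
    and n k' j :: nat
  assumes "simple_graph V E"
    and "distinct Ls" and "set Ls = E"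
    and "n \<ge> 1" and "k' \<ge> 1" and "1 \<le> j" and "j \<le> k'"
    and "k' + 1 \<le> length (gens_list Ls n)"
    and "\<not> mono_colon V (Lgen Ls n j) (Lgen Ls n (k' + 1))
            \<subseteq> ideal_colon V (edge_ideal_pow V Ls (n + 1)) (Lgen Ls n (k' + 1))"
  shows "\<exists>i. 1 \<le> i \<and> i \<le> k' \<and>
           (\<exists>x\<in>V. mono_colon V (Lgen Ls n i) (Lgen Ls n (k' + 1)) = mideal V {{#x#}}) \<and>
           mono_colon V (Lgen Ls n j) (Lgen Ls n (k' + 1))
             \<subseteq> mono_colon V (Lgen Ls n i) (Lgen Ls n (k' + 1))"
proof -
  have H: "\<forall>e\<in>set Ls. card e = 2" and HV: "\<forall>e\<in>set Ls. e \<subseteq> V"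
    using assms(1,3) unfolding simple_graph_def by auto
  define f where "f = nth Ls"
  define k where "k = length Ls"
  define L where "L = gens_list Ls n"
  have Lp: "distinct L" "set L = pow_prods Ls n" "sorted_wrt (gen_gt Ls n) L"
    using gens_list_props[OF H, of n] min_gens_eq[OF H, of n] unfolding L_def by auto
  define M where "M = L ! k'"
  define N where "N = L ! (j - 1)"
  have kL: "k' < length L" using assms(8) unfolding L_def by simp
  have jk: "j - 1 < k'" using assms(6,7) by simp
  have NM: "gen_gt Ls n N M" unfolding N_def M_def using sorted_wrt_nth_less[OF Lp(3) jk kL] .
  have Mpp: "M \<in> pow_prods Ls n" and Npp: "N \<in> pow_prods Ls n"
    using Lp(2) kL jk unfolding M_def N_def by (metis nth_mem, metis nth_mem less_trans)
  have LgM: "Lgen Ls n (k' + 1) = M" and LgN: "Lgen Ls n j = N" unfolding M_def N_def L_def by simp_all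
  have setV: "set_mset (pr f C) \<subseteq> V" if "set_mset C \<subseteq> {..<k}" for C
    using set_pr[of f C] that HV unfolding f_def k_def by fastforce
  obtain u where u: "u \<in> monomials_over V" "N \<subseteq># u + M" "u + M \<notin> edge_ideal_pow V Ls (n+1)"
    using assms(9) unfolding LgM LgN mono_colon_def ideal_colon_def by auto
  define a where "a = max_expr Ls n M"
  define b where "b = max_expr Ls n N"
  have pa: "a \<in> expressions Ls n" "expr_prod Ls a = M"
    "\<forall>c\<in>expressions Ls n. expr_prod Ls c = M \<longrightarrow> c \<noteq> a \<longrightarrow> lex_gt a c"
    using max_expr_props[OF Mpp] unfolding a_def by auto
  have pb: "b \<in> expressions Ls n" "expr_prod Ls b = N"
    using max_expr_props[OF Npp] unfolding b_def by auto
  have la: "length a = k" "sum_list a = n" and lb: "length b = k" "sum_list b = n"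
    using pa pb unfolding expressions_def k_def by auto
  define A where "A = IM b"
  define B where "B = IM a"
  have NA: "N = pr f A" using expr_prod_pr[of b Ls] pb(2) lb unfolding A_def f_def k_def by simp
  have MB: "M = pr f B" using expr_prod_pr[of a Ls] pa(2) la unfolding B_def f_def k_def by simp
  have setA: "set_mset A \<subseteq> {..<k}" using set_IM[of b] lb unfolding A_def by simp
  have setB: "set_mset B \<subseteq> {..<k}" using set_IM[of a] la unfolding B_def by simp
  have szA: "size A = n" "size B = n" using size_IM la lb unfolding A_def B_def by auto
  have MV: "set_mset M \<subseteq> V" using setV[OF setB] MB by simp
  have NV: "set_mset N \<subseteq> V" using setV[OF setA] NA by simp
  have noP: "\<not> P \<subseteq># u + M" if "P \<in> pow_prods Ls (n+1)" for P
  proof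
    assume "P \<subseteq># u + M"
    moreover have "u + M \<in> monomials_over V" using u(1) MV unfolding monomials_over_def by auto
    ultimately have "u + M \<in> edge_ideal_pow V Ls (n+1)"
      using that unfolding edge_ideal_pow_def mideal_def by blast
    thus False using u(3) by simp
  qed
  have Nu: "N - M \<subseteq># u" using u(2) diffconv by blast
  have "lex_gt b a" using NM unfolding gen_gt_def a_def b_def .
  then obtain t where t: "t < k" "\<forall>s<t. b!s = a!s" "a!t < b!t"
    unfolding lex_gt_iff using lb by auto
  have cA: "count A s = (if s < k then b!s else 0)" for s unfolding A_def count_IM lb ..
  have cB: "count B s = (if s < k then a!s else 0)" for s unfolding B_def count_IM la ..
  define A0 where "A0 = A - B"
  define B0 where "B0 = B - A"
  have tA0: "t \<in># A0" unfolding A0_def using t cA cB by (simp add: in_diff_count)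
  have tB0: "t \<notin># B0" unfolding B0_def using t cA cB by (simp add: in_diff_count)
  have ge_t: "t \<le> s" if "s \<in># A0 + B0" for s
  proof (rule ccontr)
    assume "\<not> t \<le> s"
    hence "count A s = count B s" using cA cB t by simp
    thus False using that unfolding A0_def B0_def by (simp add: in_diff_count)
  qed
  have uq: "pr f A - pr f B = pr f A0 - pr f B0"
  proof -
    have "pr f A = pr f (A - (A - B)) + pr f A0" unfolding A0_def by (metis split_inter pr_plus)
    moreover have "pr f B = pr f (A - (A - B)) + pr f B0" unfolding B0_def by (metis split_inter inter_sym pr_plus)
    ultimately show ?thesis by simp
  qed
  have sz0: "size A0 = size B0" unfolding A0_def B0_def using size_diff_sym[of A B] szA by simp
  have cd0: "\<forall>i\<in>#A0 + B0. card (f i) = 2"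
  proof
    fix i assume "i \<in># A0 + B0"
    hence "i \<in># A + B" unfolding A0_def B0_def by (meson in_diffD union_iff)
    hence "i < k" using setA setB by auto
    thus "card (f i) = 2" using H unfolding f_def k_def by auto
  qed
  obtain A1 B1 where g: "goodp f t A0 B0 A1 B1" using key[OF sz0 tA0 cd0] by blast
  have A1: "A1 \<subseteq># A0" "B1 \<subseteq># B0" "pr f A1 - pr f B1 \<subseteq># pr f A0 - pr f B0"
    using g unfolding goodp_def by auto
  have A1A: "A1 \<subseteq># A" using A1(1) unfolding A0_def by (meson diff_subset_eq_self subset_mset.order_trans)
  have B1B: "B1 \<subseteq># B" using A1(2) unfolding B0_def by (meson diff_subset_eq_self subset_mset.order_trans)
  have P1M: "pr f B1 \<subseteq># M" using pr_mono[OF B1B] MB by simp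
  define C where "C = B - B1 + A1"
  have prC: "pr f C = M - pr f B1 + pr f A1" unfolding C_def using pr_minus[OF B1B] MB by simp
  have setC: "set_mset C \<subseteq> {..<k}"
  proof -
    have "set_mset C \<subseteq> set_mset B \<union> set_mset A" unfolding C_def
      using A1A by (auto dest: in_diffD mset_subset_eqD)
    thus ?thesis using setA setB by auto
  qed
  have Dsub: "pr f A1 - pr f B1 \<subseteq># N - M" using A1(3) uq NA MB by simp
  have CinNM: "pr f C \<subseteq># (N - M) + M"
  proof -
    have "pr f C \<subseteq># M + (pr f A1 - pr f B1)" unfolding prC by (rule diff_add_sub[OF P1M])
    also have "\<dots> \<subseteq># M + (N - M)" using Dsub by simp
    finally show ?thesis by (simp add: add.commute)
  qed
  have sizeC: "size C = n - size B1 + size A1" unfolding C_def using size_Diff_submset[OF B1B] szA by simp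
  have szB1: "size B1 \<le> n" using size_mset_mono[OF B1B] szA by simp
  have vecC: "vec k D \<in> expressions Ls (size D) \<and> expr_prod Ls (vec k D) = pr f D" if "set_mset D \<subseteq> {..<k}" for D
  proof -
    have "IM (vec k D) = D" using IM_vec[OF that] .
    moreover have "sum_list (vec k D) = size (IM (vec k D))" using size_IM by metis
    ultimately show ?thesis using expr_prod_pr[of "vec k D" Ls]
      unfolding expressions_def k_def f_def by simp
  qed
  show ?thesis
  proof (cases "size A1 > size B1")
    case True
    have "n + 1 \<le> size C" using sizeC szB1 True by linarith
    then obtain C' where C': "C' \<subseteq># C" "size C' = n + 1"
      using sub_of_size[of "n+1" C] by blast
    have setC': "set_mset C' \<subseteq> {..<k}" using setC C'(1) by (meson mset_subset_eqD subset_eq)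
    have "pr f C' \<in> pow_prods Ls (n+1)" using vecC[OF setC'] C'(2) unfolding pow_prods_def by force
    moreover have "pr f C' \<subseteq># u + M"
    proof -
      have "pr f C' \<subseteq># pr f C" by (rule pr_mono[OF C'(1)])
      also have "\<dots> \<subseteq># (N - M) + M" by (rule CinNM)
      also have "\<dots> \<subseteq># u + M" using Nu by simp
      finally show ?thesis .
    qed
    ultimately show ?thesis using noP by blast
  next
    case False
    hence g2: "size A1 = size B1" "t \<in># A1" "size (pr f A1 - pr f B1) \<le> 1"
      using g unfolding goodp_def by auto
    define c where "c = vec k C"
    define N' where "N' = pr f C"
    have szC: "size C = n" using sizeC g2 szB1 by simp
    have pc: "c \<in> expressions Ls n" "expr_prod Ls c = N'"
      using vecC[OF setC] szC unfolding c_def N'_def by auto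
    have N'pp: "N' \<in> pow_prods Ls n" using pc unfolding pow_prods_def by force
    have ccount: "c!s = count C s" if "s < k" for s using that unfolding c_def vec_def by simp
    have cC: "count C s = count B s - count B1 s + count A1 s" for s
      unfolding C_def by simp
    have lexc: "lex_gt c a"
      unfolding lex_gt_iff
    proof (intro conjI exI[of _ t])
      show "length c = length a" unfolding c_def using la by simp
      show "t < length c" unfolding c_def using t by simp
      show "\<forall>s<t. c ! s = a ! s"
      proof (intro allI impI)
        fix s assume st: "s < t"
        have "s \<notin># A1" using ge_t st A1(1) by (meson leD mset_subset_eqD union_iff)
        moreover have "s \<notin># B1" using ge_t st A1(2) by (meson leD mset_subset_eqD union_iff)
        ultimately have "count C s = count B s" using cC by (simp add: not_in_iff)
        thus "c ! s = a ! s" using ccount st t cB by simp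
      qed
      have "t \<notin># B1" using tB0 A1(2) by (meson mset_subset_eqD)
      hence "count C t = count B t + count A1 t" using cC by (simp add: not_in_iff)
      moreover have "count A1 t > 0" using g2(2) by simp
      ultimately show "a ! t < c ! t" using ccount t cB by simp
    qed
    have gtN': "gen_gt Ls n N' M"
    proof -
      have "max_expr Ls n N' = c \<or> lex_gt (max_expr Ls n N') c"
        using max_expr_props[OF N'pp] pc by metis
      hence "lex_gt (max_expr Ls n N') a" using lexc lex_trans by metis
      thus ?thesis unfolding gen_gt_def a_def .
    qed
    have N'M: "N' - M = pr f A1 - pr f B1" unfolding N'_def prC by (rule diff_add_minus[OF P1M])
    have Dne: "pr f A1 - pr f B1 \<noteq> {#}"
    proof
      assume D0: "pr f A1 - pr f B1 = {#}"
      hence sub: "pr f A1 \<subseteq># pr f B1" by (metis mset_subset_eqI count_diff count_empty diff_is_0_eq)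
      have c1: "\<forall>i\<in>#A1. card (f i) = 2" using cd0 A1(1) by (meson mset_subset_eqD union_iff)
      have c2: "\<forall>i\<in>#B1. card (f i) = 2" using cd0 A1(2) by (meson mset_subset_eqD union_iff)
      have "size (pr f A1) = size (pr f B1)" using size_pr[OF c1] size_pr[OF c2] g2(1) by simp
      hence "pr f A1 = pr f B1" using size_eq_sub sub by blast
      hence "N' = M" unfolding N'_def prC using P1M by simp
      thus False using gtN' lex_irrefl unfolding gen_gt_def by metis
    qed
    then obtain x where x: "pr f A1 - pr f B1 = {#x#}"
      using g2(3) size_1_singleton_mset by (metis le_less_Suc_eq less_one nat_neq_iff size_eq_0_iff_empty One_nat_def le_neq_implies_less)
    have xV: "x \<in> V"
    proof -
      have "x \<in># N - M" using Dsub x by (simp add: insert_subset_eq_iff)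
      thus ?thesis using NV by (meson in_diffD subsetD)
    qed
    have "N' \<in> set L" using N'pp Lp(2) by simp
    then obtain p where p: "p < length L" "L ! p = N'" by (meson in_set_conv_nth)
    have pk: "p < k'"
    proof (rule ccontr)
      assume "\<not> p < k'"
      hence "p = k' \<or> k' < p" by auto
      thus False
      proof
        assume "p = k'" thus False using p gtN' lex_irrefl unfolding M_def gen_gt_def by metis
      next
        assume "k' < p"
        hence "gen_gt Ls n M N'" using sorted_wrt_nth_less[OF Lp(3) _ p(1)] p unfolding M_def by metis
        thus False using gtN' lex_asym unfolding gen_gt_def by metis
      qed
    qed
    have LgN': "Lgen Ls n (p + 1) = N'" using p unfolding L_def by simp
    have eq1: "mono_colon V N' M = mideal V {{#x#}}"
      unfolding mono_colon_def mideal_def using diffconv[of N' _ M] N'M x by auto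
    have eq2: "mono_colon V N M \<subseteq> mono_colon V N' M"
    proof
      fix w assume "w \<in> mono_colon V N M"
      hence w: "w \<in> monomials_over V" "N - M \<subseteq># w" unfolding mono_colon_def using diffconv by auto
      have "{#x#} \<subseteq># N - M" using Dsub x by simp
      hence "N' - M \<subseteq># w" using w(2) N'M x by (metis subset_mset.order_trans)
      thus "w \<in> mono_colon V N' M" unfolding mono_colon_def using w(1) diffconv by auto
    qed
    show ?thesis unfolding LgM LgN
      by (intro exI[of _ "p+1"]) (use pk eq1 eq2 xV LgN' in auto)
  qed
qed

end
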